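(* There are constants $C,C'>0$ such that for every $\delta>0$, every $R>1$, every $(\delta^2,R^2)$-lattice $(x_j)_{j\in J}$ in $F$ and every $(\delta,R)$-lattice $(\zeta_{j'})_{j'\in J'}$ in $E$, the family $(\zeta_{j'},x_j)_{(j,j')\in J\times J'}$ is a $(C\delta,C'R)$-lattice on $\mathcal N$.
   Context: Let $E$ be a complex Hilbert space, $F$ a real Hilbert space (both with their Euclidean distances), and $\Phi\colon E\times E\to F_{\mathbb C}$ a hermitian map (complex-linear in the first variable, conjugate-linear in the second); $\Phi(\zeta)=\Phi(\zeta,\zeta)$. $\mathcal N=E\times F$ with group law $(\zeta,x)(\zeta',x')=(\zeta+\zeta',x+x'+2\operatorname{Im}\Phi(\zeta,\zeta'))$, endowed with a fixed left-invariant distance $d$ which is homogeneous of degree $1$ with respect to the dilations $t\cdot(\zeta,x)=(t\zeta,t^2x)$, $t>0$. In a metric space, a family $(a_k)$ is a $(\delta,R)$-lattice if the balls $B(a_k,\delta)$ are pairwise disjoint and the balls $B(a_k,R\delta)$ cover the space. *)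

theory Defs
  imports "HOL-Analysis.Analysis"
begin

text \<open>E = complex^'n (finite-dimensional complex Hilbert space, Euclidean norm),
  F = real^'m, F_C = complex^'m.\<close>

definition hermitian_map ::
  "(complex^'n \<Rightarrow> complex^'n \<Rightarrow> complex^'m) \<Rightarrow> bool" where
  "hermitian_map \<Phi> \<longleftrightarrow>
     (\<forall>z1 z2 w. \<Phi> (z1 + z2) w = \<Phi> z1 w + \<Phi> z2 w) \<and>
     (\<forall>c z w. \<Phi> (c *s z) w = c *s \<Phi> z w) \<and>
     (\<forall>z w1 w2. \<Phi> z (w1 + w2) = \<Phi> z w1 + \<Phi> z w2) \<and>
     (\<forall>c z w. \<Phi> z (c *s w) = cnj c *s \<Phi> z w) \<and>
     (\<forall>z w. \<Phi> w z = (\<chi> i. cnj (\<Phi> z w $ i)))"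

definition ImPhi ::
  "(complex^'n \<Rightarrow> complex^'n \<Rightarrow> complex^'m) \<Rightarrow> complex^'n \<Rightarrow> complex^'n \<Rightarrow> real^'m" where
  "ImPhi \<Phi> z w = (\<chi> i. Im (\<Phi> z w $ i))"

definition Nmult ::
  "(complex^'n \<Rightarrow> complex^'n \<Rightarrow> complex^'m) \<Rightarrow>
   ((complex^'n) \<times> (real^'m)) \<Rightarrow> ((complex^'n) \<times> (real^'m)) \<Rightarrow> ((complex^'n) \<times> (real^'m))" where
  "Nmult \<Phi> p q = (fst p + fst q, snd p + snd q + 2 *\<^sub>R ImPhi \<Phi> (fst p) (fst q))"

definition Ndil :: "real \<Rightarrow> ((complex^'n) \<times> (real^'m)) \<Rightarrow> ((complex^'n) \<times> (real^'m))" where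
  "Ndil t p = (t *\<^sub>R fst p, (t^2) *\<^sub>R snd p)"

definition is_distance :: "('p \<Rightarrow> 'p \<Rightarrow> real) \<Rightarrow> bool" where
  "is_distance d \<longleftrightarrow> (\<forall>x y. d x y = 0 \<longleftrightarrow> x = y) \<and> (\<forall>x y. d x y = d y x) \<and>
     (\<forall>x y z. d x z \<le> d x y + d y z)"

definition left_invariant_homogeneous_distance ::
  "(complex^'n \<Rightarrow> complex^'n \<Rightarrow> complex^'m) \<Rightarrow>
   (((complex^'n) \<times> (real^'m)) \<Rightarrow> ((complex^'n) \<times> (real^'m)) \<Rightarrow> real) \<Rightarrow> bool" where
  "left_invariant_homogeneous_distance \<Phi> d \<longleftrightarrow> is_distance d \<and>
     (\<forall>g p q. d (Nmult \<Phi> g p) (Nmult \<Phi> g q) = d p q) \<and>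
     (\<forall>t p q. t > 0 \<longrightarrow> d (Ndil t p) (Ndil t q) = t * d p q)"

definition dball :: "('p \<Rightarrow> 'p \<Rightarrow> real) \<Rightarrow> 'p \<Rightarrow> real \<Rightarrow> 'p set" where
  "dball d a r = {y. d a y < r}"

definition is_lattice ::
  "('p \<Rightarrow> 'p \<Rightarrow> real) \<Rightarrow> 'j set \<Rightarrow> ('j \<Rightarrow> 'p) \<Rightarrow> real \<Rightarrow> real \<Rightarrow> bool" where
  "is_lattice d J a \<delta> R \<longleftrightarrow>
     (\<forall>k\<in>J. \<forall>k'\<in>J. k \<noteq> k' \<longrightarrow> dball d (a k) \<delta> \<inter> dball d (a k') \<delta> = {}) \<and>
     (\<Union>k\<in>J. dball d (a k) (R * \<delta>)) = UNIV"

end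

theory Submission
  imports Defs
begin

lemma ImPhi_bilinear:
  fixes \<Phi> :: "complex^'n \<Rightarrow> complex^'n \<Rightarrow> complex^'m"
  assumes h: "hermitian_map \<Phi>"
  shows "bilinear (ImPhi \<Phi>)"
proof -
  have sc: "(complex_of_real r) *s z = r *\<^sub>R z" for r and z :: "complex^'n"
    by (simp add: vec_eq_iff scaleR_vec_def vector_scalar_mult_def scaleR_conv_of_real del: vector_scaleR_component)
  have H1: "\<Phi> (z1 + z2) w = \<Phi> z1 w + \<Phi> z2 w" for z1 z2 w
    using h unfolding hermitian_map_def by blast
  have H2: "\<Phi> z (w1 + w2) = \<Phi> z w1 + \<Phi> z w2" for z w1 w2
    using h unfolding hermitian_map_def by blast
  have H3: "\<Phi> (c *s z) w = c *s \<Phi> z w" for c z w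
    using h unfolding hermitian_map_def by blast
  have H4: "\<Phi> z (c *s w) = cnj c *s \<Phi> z w" for c z w
    using h unfolding hermitian_map_def by blast
  have a1: "ImPhi \<Phi> (z1 + z2) w = ImPhi \<Phi> z1 w + ImPhi \<Phi> z2 w" for z1 z2 w
    by (simp add: H1 ImPhi_def vec_eq_iff)
  have a2: "ImPhi \<Phi> z (w1 + w2) = ImPhi \<Phi> z w1 + ImPhi \<Phi> z w2" for z w1 w2
    by (simp add: H2 ImPhi_def vec_eq_iff)
  have s1: "ImPhi \<Phi> (r *\<^sub>R z) w = r *\<^sub>R ImPhi \<Phi> z w" for r z w
  proof -
    have "\<Phi> (r *\<^sub>R z) w = complex_of_real r *s \<Phi> z w"
      using H3[of "complex_of_real r" z w] by (simp only: sc)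
    then show ?thesis by (simp add: ImPhi_def vec_eq_iff)
  qed
  have s2: "ImPhi \<Phi> z (r *\<^sub>R w) = r *\<^sub>R ImPhi \<Phi> z w" for r z w
  proof -
    have "\<Phi> z (r *\<^sub>R w) = cnj (complex_of_real r) *s \<Phi> z w"
      using H4[of z "complex_of_real r" w] by (simp only: sc)
    then show ?thesis by (simp add: ImPhi_def vec_eq_iff)
  qed
  show ?thesis unfolding bilinear_def
    by (auto intro!: linearI simp: a1 a2 s1 s2)
qed

definition Kf :: "(complex^'n \<Rightarrow> complex^'n \<Rightarrow> complex^'m) \<Rightarrow> complex^'n \<Rightarrow> complex^'n \<Rightarrow> real^'m" where
  "Kf \<Phi> a b = 2 *\<^sub>R ImPhi \<Phi> (-a) b - 2 *\<^sub>R ImPhi \<Phi> (-a) a"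

lemma Kf_same[simp]: "Kf \<Phi> a a = 0" by (simp add: Kf_def)

lemma d_key:
  assumes "left_invariant_homogeneous_distance \<Phi> d"
  shows "d (a,b) (a',b') = d (0,0) (a'-a, b'-b + Kf \<Phi> a a')"
proof -
  define g where "g = (-a, -b - 2 *\<^sub>R ImPhi \<Phi> (-a) a)"
  have "\<forall>g p q. d (Nmult \<Phi> g p) (Nmult \<Phi> g q) = d p q"
    using assms unfolding left_invariant_homogeneous_distance_def by blast
  then have "d (a,b) (a',b') = d (Nmult \<Phi> g (a,b)) (Nmult \<Phi> g (a',b'))"
    by metis
  also have "Nmult \<Phi> g (a,b) = (0,0)" by (simp add: g_def Nmult_def)
  also have "Nmult \<Phi> g (a',b') = (a'-a, b'-b + Kf \<Phi> a a')"
    by (simp add: g_def Nmult_def Kf_def algebra_simps)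
  finally show ?thesis .
qed

lemma d_homog0:
  assumes "left_invariant_homogeneous_distance \<Phi> d" "t > 0"
  shows "d (0,0) (t *\<^sub>R w, (t^2) *\<^sub>R y) = t * d (0,0) (w,y)"
proof -
  have "d (Ndil t (0,0)) (Ndil t (w,y)) = t * d (0,0) (w,y)"
    using assms unfolding left_invariant_homogeneous_distance_def by blast
  then show ?thesis by (simp add: Ndil_def)
qed


context
  fixes \<Phi> :: "complex^'n \<Rightarrow> complex^'n \<Rightarrow> complex^'m"
    and d :: "((complex^'n) \<times> (real^'m)) \<Rightarrow> ((complex^'n) \<times> (real^'m)) \<Rightarrow> real"
  assumes Hh: "hermitian_map \<Phi>"
    and L: "left_invariant_homogeneous_distance \<Phi> d"
begin

lemma dist0: "d p p = 0" and dsym: "d p q = d q p" and dtri: "d p r \<le> d p q + d q r"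
  and dpos: "d p q = 0 \<longleftrightarrow> p = q"
  using L unfolding left_invariant_homogeneous_distance_def is_distance_def by blast+

lemma dnn: "d p q \<ge> 0"
proof -
  have "d p p \<le> d p q + d q p" by (rule dtri)
  then show ?thesis using dsym[of q p] dist0[of p] by linarith
qed

lemma key: "d (a,b) (a',b') = d (0,0) (a'-a, b'-b + Kf \<Phi> a a')"
  using d_key[OF L] .

lemma homog: "t > 0 \<Longrightarrow> d (0,0) (t *\<^sub>R w, (t^2) *\<^sub>R y) = t * d (0,0) (w,y)"
  using d_homog0[OF L] by blast

lemma F0: "d (0,0) (0, y+z) \<le> d (0,0) (0,y) + d (0,0) (0,z)"
proof -
  have "d (0,0) (0, y+z) \<le> d (0,0) (0,y) + d (0,y) (0,y+z)" by (rule dtri)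
  also have "d (0,y) (0,y+z) = d (0,0) (0,z)" using key[of 0 y 0 "y+z"] by simp
  finally show ?thesis .
qed

lemma F0sum: "finite S \<Longrightarrow> d (0,0) (0, \<Sum>i\<in>S. f i) \<le> (\<Sum>i\<in>S. d (0,0) (0, f i))"
proof (induct S rule: finite_induct)
  case empty then show ?case using dist0[of "(0,0)"] by simp
next
  case (insert a S)
  then show ?case using F0[of "f a" "sum f S"] by simp
qed

definition "Mb b = max (d (0,0) (0,b)) (d (0,0) (0,-b))"

lemma F1: "d (0,0) (0, c *\<^sub>R b) \<le> sqrt \<bar>c\<bar> * Mb b"
proof -
  consider "c > 0" | "c = 0" | "c < 0" by linarith
  then show ?thesis
  proof cases
    case 1
    have "d (0,0) (0, c *\<^sub>R b) = d (0,0) (sqrt c *\<^sub>R 0, (sqrt c ^ 2) *\<^sub>R b)" using 1 by simp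
    also have "\<dots> = sqrt c * d (0,0) (0,b)" using homog[of "sqrt c" 0 b] 1 by simp
    finally show ?thesis using 1 unfolding Mb_def
      by (simp add: mult_left_mono)
  next
    case 2 then show ?thesis using dist0[of "(0,0)"] by simp
  next
    case 3
    have "d (0,0) (0, c *\<^sub>R b) = d (0,0) (sqrt (-c) *\<^sub>R 0, (sqrt (-c) ^ 2) *\<^sub>R (-b))" using 3 by simp
    also have "\<dots> = sqrt (-c) * d (0,0) (0,-b)" using homog[of "sqrt (-c)" 0 "-b"] 3 by simp
    finally show ?thesis using 3 unfolding Mb_def
      by (simp add: mult_left_mono)
  qed
qed

definition "A1 = (\<Sum>b\<in>Basis. Mb b)"

lemma Mb_nn: "Mb b \<ge> 0" unfolding Mb_def using dnn by (simp add: le_max_iff_disj)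

lemma F2: "d (0,0) (0, y) \<le> A1 * sqrt (norm y)"
proof -
  have "d (0,0) (0, y) = d (0,0) (0, \<Sum>b\<in>Basis. (y \<bullet> b) *\<^sub>R b)"
    by (simp add: euclidean_representation)
  also have "\<dots> \<le> (\<Sum>b\<in>Basis. d (0,0) (0, (y \<bullet> b) *\<^sub>R b))" by (rule F0sum) simp
  also have "\<dots> \<le> (\<Sum>b\<in>Basis. sqrt (norm y) * Mb b)"
  proof (rule sum_mono)
    fix b :: "real^'m" assume b: "b \<in> Basis"
    have "sqrt \<bar>y \<bullet> b\<bar> \<le> sqrt (norm y)" using Basis_le_norm[OF b] by simp
    then have "sqrt \<bar>y \<bullet> b\<bar> * Mb b \<le> sqrt (norm y) * Mb b" using Mb_nn by (simp add: mult_right_mono)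
    then show "d (0,0) (0, (y \<bullet> b) *\<^sub>R b) \<le> sqrt (norm y) * Mb b" using F1 order_trans by blast
  qed
  also have "\<dots> = A1 * sqrt (norm y)" unfolding A1_def by (simp add: sum_distrib_left mult.commute)
  finally show ?thesis .
qed

lemma A1_nn: "A1 \<ge> 0" unfolding A1_def using Mb_nn by (simp add: sum_nonneg)

lemma F3: "d (0,0) (w, y) \<le> d (0,0) (w,0) + d (0,0) (0,y)"
proof -
  have "d (0,0) (w, y) \<le> d (0,0) (w,0) + d (w,0) (w,y)" by (rule dtri)
  also have "d (w,0) (w,y) = d (0,0) (0,y)" using key[of w 0 w y] by simp
  finally show ?thesis .
qed

definition "BB = (SOME B. B > 0 \<and> (\<forall>x y. norm (ImPhi \<Phi> x y) \<le> B * norm x * norm y))"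

lemma BB: "BB > 0" "norm (ImPhi \<Phi> x y) \<le> BB * norm x * norm y"
proof -
  have "\<exists>B. B > 0 \<and> (\<forall>x y. norm (ImPhi \<Phi> x y) \<le> B * norm x * norm y)"
    using bilinear_bounded_pos[OF ImPhi_bilinear[OF Hh]] by blast
  then have "BB > 0 \<and> (\<forall>x y. norm (ImPhi \<Phi> x y) \<le> BB * norm x * norm y)"
    unfolding BB_def by (rule someI_ex)
  then show "BB > 0" "norm (ImPhi \<Phi> x y) \<le> BB * norm x * norm y" by auto
qed

lemma Kf_bound: "norm (Kf \<Phi> a b) \<le> 2 * BB * norm a * norm b + 2 * BB * norm a * norm a"
proof -
  have "norm (Kf \<Phi> a b) \<le> norm (2 *\<^sub>R ImPhi \<Phi> (-a) b) + norm (2 *\<^sub>R ImPhi \<Phi> (-a) a)"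
    unfolding Kf_def by (rule norm_triangle_ineq4)
  also have "\<dots> = 2 * norm (ImPhi \<Phi> (-a) b) + 2 * norm (ImPhi \<Phi> (-a) a)" by simp
  also have "\<dots> \<le> 2 * (BB * norm a * norm b) + 2 * (BB * norm a * norm a)"
    using BB(2)[of "-a" b] BB(2)[of "-a" a] by simp
  finally show ?thesis by simp
qed

lemma F4: "d (0,0) (u+v, 0) \<le> d (0,0) (u,0) + d (0,0) (v,0) + A1 * sqrt (norm (Kf \<Phi> u (u+v)))"
proof -
  have "d (0,0) (u+v, 0) \<le> d (0,0) (u,0) + d (u,0) (u+v,0)" by (rule dtri)
  also have "d (u,0) (u+v,0) = d (0,0) (v, Kf \<Phi> u (u+v))" using key[of u 0 "u+v" 0] by simp
  also have "\<dots> \<le> d (0,0) (v,0) + d (0,0) (0, Kf \<Phi> u (u+v))" by (rule F3)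
  finally show ?thesis using F2[of "Kf \<Phi> u (u+v)"] by linarith
qed

definition "Mc b = max (d (0,0) (b,0)) (d (0,0) (-b,0))"

lemma Mc_nn: "Mc b \<ge> 0" unfolding Mc_def using dnn by (simp add: le_max_iff_disj)

lemma F5: "d (0,0) (c *\<^sub>R b, 0) \<le> \<bar>c\<bar> * Mc b"
proof -
  consider "c > 0" | "c = 0" | "c < 0" by linarith
  then show ?thesis
  proof cases
    case 1
    have "d (0,0) (c *\<^sub>R b, 0) = d (0,0) (c *\<^sub>R b, (c ^ 2) *\<^sub>R 0)" by simp
    also have "\<dots> = c * d (0,0) (b,0)" using homog[of c b 0] 1 by simp
    finally show ?thesis using 1 unfolding Mc_def
      by (simp add: mult_left_mono)
  next
    case 2 then show ?thesis using dist0[of "(0,0)"] by simp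
  next
    case 3
    have "d (0,0) (c *\<^sub>R b, 0) = d (0,0) ((-c) *\<^sub>R (-b), ((-c) ^ 2) *\<^sub>R 0)" by simp
    also have "\<dots> = (-c) * d (0,0) (-b,0)" using homog[of "-c" "-b" 0] 3 by simp
    finally show ?thesis using 3 unfolding Mc_def
      by (simp add: mult_left_mono)
  qed
qed

definition "G H0 = A1 * sqrt (2 * BB * (H0 + 1) + 2 * BB)"

lemma F6:
  assumes "finite S"
  shows "card S \<le> H0 \<Longrightarrow> (\<forall>i\<in>S. norm (f i) \<le> 1) \<Longrightarrow>
    d (0,0) (\<Sum>i\<in>S. f i, 0) \<le> (\<Sum>i\<in>S. d (0,0) (f i, 0)) + real (card S) * G (real H0)"
  using assms
proof (induct S rule: finite_induct)
  case empty then show ?case using dist0[of "(0,0)"] by simp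
next
  case (insert a S)
  define u where "u = f a"
  define v where "v = (\<Sum>i\<in>S. f i)"
  have cS: "card S \<le> H0" and cS': "card S + 1 \<le> H0" using insert by auto
  have nu: "norm u \<le> 1" using insert u_def by auto
  have "norm v \<le> (\<Sum>i\<in>S. 1)" unfolding v_def by (rule sum_norm_le) (use insert in auto)
  then have nv: "norm v \<le> real (card S)" by simp
  have nuv: "norm (u+v) \<le> real H0 + 1"
    using norm_triangle_ineq[of u v] nu nv cS by linarith
  have "norm (Kf \<Phi> u (u+v)) \<le> 2 * BB * norm u * norm (u+v) + 2 * BB * norm u * norm u"
    by (rule Kf_bound)
  also have "\<dots> \<le> 2 * BB * (real H0 + 1) + 2 * BB"
  proof -
    have h1: "norm u * norm (u+v) \<le> 1 * (real H0 + 1)"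
      using nu nuv by (intro mult_mono) auto
    have h2: "norm u * norm u \<le> 1 * 1" using nu by (intro mult_mono) auto
    have e1: "(2*BB)*(norm u * norm (u+v)) \<le> (2*BB)*(1 * (real H0 + 1))"
      using BB(1) h1 by (intro mult_left_mono) auto
    have e2: "(2*BB)*(norm u * norm u) \<le> (2*BB)*(1*1)"
      using BB(1) h2 by (intro mult_left_mono) auto
    show ?thesis using e1 e2 by (simp only: mult.assoc mult_1_left mult_1_right)
  qed
  finally have "A1 * sqrt (norm (Kf \<Phi> u (u+v))) \<le> G (real H0)"
    unfolding G_def using A1_nn by (intro mult_left_mono) auto
  moreover have "d (0,0) (v,0) \<le> (\<Sum>i\<in>S. d (0,0) (f i, 0)) + real (card S) * G (real H0)"
    using insert cS unfolding v_def by auto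
  ultimately have "d (0,0) (u+v, 0) \<le> d (0,0) (u,0) + (\<Sum>i\<in>S. d (0,0) (f i, 0)) + real (card S) * G (real H0) + G (real H0)"
    using F4[of u v] by linarith
  then show ?case using insert unfolding u_def v_def by (simp add: algebra_simps)
qed

definition "A2 = (\<Sum>b\<in>Basis. Mc b) + real (card (Basis :: (complex^'n) set)) * G (real (card (Basis :: (complex^'n) set)))"

lemma F7:
  fixes w :: "complex^'n"
  assumes "norm w \<le> 1"
  shows "d (0,0) (w,0) \<le> A2"
proof -
  have "d (0,0) (w,0) = d (0,0) (\<Sum>b\<in>Basis. (w \<bullet> b) *\<^sub>R b, 0)"
    by (simp add: euclidean_representation)
  also have "\<dots> \<le> (\<Sum>b\<in>Basis. d (0,0) ((w \<bullet> b) *\<^sub>R b, 0)) + real (card (Basis :: (complex^'n) set)) * G (real (card (Basis :: (complex^'n) set)))"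
  proof (rule F6)
    show "\<forall>i\<in>Basis. norm ((w \<bullet> i) *\<^sub>R i) \<le> (1::real)"
    proof
      fix i :: "complex^'n" assume i: "i \<in> Basis"
      show "norm ((w \<bullet> i) *\<^sub>R i) \<le> (1::real)" using Basis_le_norm[OF i, of w] assms i by simp
    qed
  qed auto
  also have "(\<Sum>b\<in>Basis. d (0,0) ((w \<bullet> b) *\<^sub>R b, 0)) \<le> (\<Sum>b\<in>Basis. Mc b)"
  proof (rule sum_mono)
    fix b :: "complex^'n" assume b: "b \<in> Basis"
    have "\<bar>w \<bullet> b\<bar> \<le> 1" using Basis_le_norm[OF b, of w] assms by simp
    then have "\<bar>w \<bullet> b\<bar> * Mc b \<le> Mc b" using Mc_nn by (simp add: mult_left_le_one_le)
    then show "d (0,0) ((w \<bullet> b) *\<^sub>R b, 0) \<le> Mc b" using F5 order_trans by blast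
  qed
  finally show ?thesis unfolding A2_def by simp
qed

lemma A2_nn: "A2 \<ge> 0" using F7[of 0] dnn[of "(0,0)" "(0,0)"] by simp

definition "AU = A1 + A2"

lemma AU_nn: "AU \<ge> 0" unfolding AU_def using A1_nn A2_nn by simp

lemma upper: "d (0,0) (w,y) \<le> AU * (norm w + sqrt (norm y))"
proof (cases "norm w + sqrt (norm y) = 0")
  case True
  then have "w = 0" "y = 0" by (auto simp: add_nonneg_eq_0_iff)
  then show ?thesis using dist0[of "(0,0)"] by simp
next
  case False
  define t where "t = norm w + sqrt (norm y)"
  have t: "t > 0" using False unfolding t_def by (simp add: add_pos_nonneg order_le_neq_trans)
  define w' where "w' = (1/t) *\<^sub>R w"
  define y' where "y' = (1/t^2) *\<^sub>R y"
  have eq: "(w,y) = (t *\<^sub>R w', (t^2) *\<^sub>R y')" using t unfolding w'_def y'_def by simp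
  have nw: "norm w' \<le> 1" using t unfolding w'_def t_def by (simp add: divide_le_eq_1)
  have "sqrt (norm y) \<le> t" unfolding t_def by simp
  then have "sqrt (norm y) ^ 2 \<le> t ^ 2" by (intro power_mono) auto
  then have "norm y \<le> t^2" by simp
  then have ny: "norm y' \<le> 1" using t unfolding y'_def by (simp add: divide_le_eq_1)
  have "d (0,0) (w',y') \<le> d (0,0) (w',0) + d (0,0) (0,y')" by (rule F3)
  also have "\<dots> \<le> A2 + A1 * sqrt (norm y')" using F7[OF nw] F2[of y'] by linarith
  also have "\<dots> \<le> A2 + A1 * 1" using ny A1_nn by (intro add_left_mono mult_left_mono) auto
  finally have "d (0,0) (w',y') \<le> AU" unfolding AU_def by simp
  moreover have "d (0,0) (w,y) = t * d (0,0) (w',y')" using eq homog[OF t, of w' y'] by simp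
  ultimately show ?thesis using t unfolding t_def[symmetric] by (simp add: mult.commute)
qed

lemma dcont: "isCont (d (0,0)) p"
proof -
  obtain a b where p: "p = (a,b)" by fastforce
  have BLin: "bounded_linear (ImPhi \<Phi> (-a))"
    using ImPhi_bilinear[OF Hh] unfolding bilinear_conv_bounded_bilinear
    by (rule bounded_bilinear.bounded_linear_right)
  define g where "g q = AU * (norm (fst q - a) + sqrt (norm (snd q - b + Kf \<Phi> a (fst q))))" for q
  have "isCont g p" unfolding g_def Kf_def
    by (intro continuous_intros bounded_linear.continuous[OF BLin])
  moreover have "g p = 0" unfolding g_def p by simp
  ultimately have gl: "(g \<longlongrightarrow> 0) (at p)" by (metis isCont_def)
  have "norm (d (0,0) q - d (0,0) p) \<le> g q" for q
  proof -
    obtain a' b' where q: "q = (a',b')" by fastforce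
    have "d (0,0) q \<le> d (0,0) p + d p q" by (rule dtri)
    moreover have "d (0,0) p \<le> d (0,0) q + d q p" by (rule dtri)
    moreover have "d p q = d (0,0) (a'-a, b'-b + Kf \<Phi> a a')" unfolding p q by (rule key)
    moreover have "\<dots> \<le> g q" unfolding g_def q using upper by simp
    ultimately show ?thesis using dsym[of p q] by simp
  qed
  then have "((\<lambda>q. d (0,0) q - d (0,0) p) \<longlongrightarrow> 0) (at p)"
    by (intro Lim_null_comparison[OF _ gl]) auto
  then show ?thesis unfolding isCont_def by (rule LIM_zero_cancel)
qed

lemma lower: "\<exists>a>0. \<forall>w y. a * (norm w + sqrt (norm y)) \<le> d (0,0) (w,y)"
proof -
  define S where "S = {p :: (complex^'n) \<times> (real^'m). norm (fst p) + sqrt (norm (snd p)) = 1}"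
  have "closed S" unfolding S_def
    by (intro closed_Collect_eq continuous_intros)
  moreover have "bounded S" unfolding bounded_iff
  proof (intro exI ballI)
    fix p assume "p \<in> S"
    then have e: "norm (fst p) + sqrt (norm (snd p)) = 1" unfolding S_def by simp
    have "sqrt (norm (snd p)) \<ge> 0" "norm (fst p) \<ge> 0" by auto
    then have "norm (fst p) \<le> 1" "sqrt (norm (snd p)) \<le> 1" using e by linarith+
    then have "norm (fst p) \<le> 1" "norm (snd p) \<le> 1" by auto
    moreover have "norm p \<le> norm (fst p) + norm (snd p)"
      using norm_Pair_le[of "fst p" "snd p"] by simp
    ultimately show "norm p \<le> 2" by simp
  qed
  ultimately have cS: "compact S" by (simp add: compact_eq_bounded_closed)
  obtain b :: "real^'m" where b: "b \<in> Basis" using nonempty_Basis by blast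
  have "(0, b) \<in> S" unfolding S_def using b by simp
  then have ne: "S \<noteq> {}" by blast
  have "continuous_on S (d (0,0))" using dcont by (simp add: continuous_at_imp_continuous_on)
  then obtain x0 where x0: "x0 \<in> S" and mn: "\<forall>y\<in>S. d (0,0) x0 \<le> d (0,0) y"
    using continuous_attains_inf[OF cS ne] by blast
  have "x0 \<noteq> (0,0)" using x0 unfolding S_def by auto
  then have apos: "d (0,0) x0 > 0" using dnn[of "(0,0)" x0] dpos[of "(0,0)" x0] by auto
  show ?thesis
  proof (intro exI conjI allI)
    show "d (0,0) x0 > 0" by (rule apos)
    fix w y
    show "d (0,0) x0 * (norm w + sqrt (norm y)) \<le> d (0,0) (w,y)"
    proof (cases "norm w + sqrt (norm y) = 0")
      case True then show ?thesis using dnn by simp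
    next
      case False
      define t where "t = norm w + sqrt (norm y)"
      have t: "t > 0" using False unfolding t_def by (simp add: add_pos_nonneg order_le_neq_trans)
      define w' where "w' = (1/t) *\<^sub>R w"
      define y' where "y' = (1/t^2) *\<^sub>R y"
      have eq: "(w,y) = (t *\<^sub>R w', (t^2) *\<^sub>R y')" using t unfolding w'_def y'_def by simp
      have "norm w' + sqrt (norm y') = norm w / t + sqrt (norm y) / t"
        using t unfolding w'_def y'_def by (simp add: real_sqrt_divide)
      also have "\<dots> = 1" using t unfolding t_def by (simp add: add_divide_distrib[symmetric])
      finally have "(w',y') \<in> S" unfolding S_def by simp
      then have "d (0,0) x0 \<le> d (0,0) (w',y')" using mn by blast
      moreover have "d (0,0) (w,y) = t * d (0,0) (w',y')" using eq homog[OF t, of w' y'] by simp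
      ultimately show ?thesis using t unfolding t_def[symmetric] by (simp add: mult.commute)
    qed
  qed
qed

lemma upper_ex: "\<exists>A\<ge>0. \<forall>w y. d (0,0) (w,y) \<le> A * (norm w + sqrt (norm y))"
  using upper AU_nn by blast

end

theorem lemma6p1:
  fixes \<Phi> :: "complex^'n \<Rightarrow> complex^'n \<Rightarrow> complex^'m"
    and d :: "((complex^'n) \<times> (real^'m)) \<Rightarrow> ((complex^'n) \<times> (real^'m)) \<Rightarrow> real"
  assumes "hermitian_map \<Phi>"
    and "left_invariant_homogeneous_distance \<Phi> d"
  shows "\<exists>C C'. C > 0 \<and> C' > 0 \<and>
    (\<forall>\<delta> R (J :: 'j set) (x :: 'j \<Rightarrow> real^'m) (J' :: 'k set) (\<zeta> :: 'k \<Rightarrow> complex^'n).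
       \<delta> > 0 \<longrightarrow> R > 1 \<longrightarrow>
       is_lattice dist J x (\<delta>^2) (R^2) \<longrightarrow>
       is_lattice dist J' \<zeta> \<delta> R \<longrightarrow>
       is_lattice d (J \<times> J') (\<lambda>(j, j'). (\<zeta> j', x j)) (C * \<delta>) (C' * R))"
proof -
  note Hh = assms(1) and L = assms(2)
  obtain a where a: "a > 0" and lo: "\<And>w y. a * (norm w + sqrt (norm y)) \<le> d (0,0) (w,y)"
    using lower[OF Hh L] by blast
  obtain A where A: "A \<ge> 0" and up: "\<And>w y. d (0,0) (w,y) \<le> A * (norm w + sqrt (norm y))"
    using upper_ex[OF Hh L] by blast
  define C where "C = a / 2"
  define C' where "C' = 2 * (A + 1) / C"
  have C: "C > 0" using a unfolding C_def by simp
  have C': "C' > 0" using C A unfolding C'_def by simp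
  have key': "\<And>a b a' b'. d (a,b) (a',b') = d (0,0) (a'-a, b'-b + Kf \<Phi> a a')"
    using key[OF Hh L] .
  have tri: "\<And>p q r. d p r \<le> d p q + d q r" using dtri[OF Hh L] .
  have sym: "\<And>p q. d p q = d q p" using dsym[OF Hh L] .
  show ?thesis
  proof (intro exI conjI allI impI)
    show "C > 0" "C' > 0" by (fact C, fact C')
    fix \<delta> R and J :: "'j set" and x :: "'j \<Rightarrow> real^'m" and J' :: "'k set" and \<zeta> :: "'k \<Rightarrow> complex^'n"
    assume \<delta>: "\<delta> > 0" and R: "R > 1" and LX: "is_lattice dist J x (\<delta>^2) (R^2)"
      and LZ: "is_lattice dist J' \<zeta> \<delta> R"
    have dX: "\<And>k k'. k \<in> J \<Longrightarrow> k' \<in> J \<Longrightarrow> k \<noteq> k' \<Longrightarrow> dist (x k) (x k') \<ge> \<delta>^2"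
    proof (rule ccontr)
      fix k k' assume "k \<in> J" "k' \<in> J" "k \<noteq> k'" "\<not> dist (x k) (x k') \<ge> \<delta>^2"
      then have "x k' \<in> dball dist (x k) (\<delta>^2) \<inter> dball dist (x k') (\<delta>^2)"
        using \<delta> by (simp add: dball_def)
      then show False using LX \<open>k \<in> J\<close> \<open>k' \<in> J\<close> \<open>k \<noteq> k'\<close> unfolding is_lattice_def by blast
    qed
    have dZ: "\<And>k k'. k \<in> J' \<Longrightarrow> k' \<in> J' \<Longrightarrow> k \<noteq> k' \<Longrightarrow> dist (\<zeta> k) (\<zeta> k') \<ge> \<delta>"
    proof (rule ccontr)
      fix k k' assume "k \<in> J'" "k' \<in> J'" "k \<noteq> k'" "\<not> dist (\<zeta> k) (\<zeta> k') \<ge> \<delta>"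
      then have "\<zeta> k' \<in> dball dist (\<zeta> k) \<delta> \<inter> dball dist (\<zeta> k') \<delta>"
        using \<delta> by (simp add: dball_def)
      then show False using LZ \<open>k \<in> J'\<close> \<open>k' \<in> J'\<close> \<open>k \<noteq> k'\<close> unfolding is_lattice_def by blast
    qed
    show "is_lattice d (J \<times> J') (\<lambda>(j, j'). (\<zeta> j', x j)) (C * \<delta>) (C' * R)"
      unfolding is_lattice_def
    proof (intro conjI ballI impI)
      fix P Q assume P: "P \<in> J \<times> J'" and Q: "Q \<in> J \<times> J'" and PQ: "P \<noteq> Q"
      obtain j j' where Pj: "P = (j,j')" by fastforce
      obtain k k' where Qk: "Q = (k,k')" by fastforce
      show "dball d ((\<lambda>(j, j'). (\<zeta> j', x j)) P) (C * \<delta>) \<inter> dball d ((\<lambda>(j, j'). (\<zeta> j', x j)) Q) (C * \<delta>) = {}"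
      proof (rule ccontr)
        assume "\<not> ?thesis"
        then obtain q where q1: "d (\<zeta> j', x j) q < C * \<delta>" and q2: "d (\<zeta> k', x k) q < C * \<delta>"
          unfolding Pj Qk dball_def by auto
        have "d (\<zeta> j', x j) (\<zeta> k', x k) \<le> d (\<zeta> j', x j) q + d q (\<zeta> k', x k)" by (rule tri)
        then have lt: "d (\<zeta> j', x j) (\<zeta> k', x k) < a * \<delta>"
          using q1 q2 sym[of q "(\<zeta> k', x k)"] unfolding C_def by simp
        have ge: "a * (norm (\<zeta> k' - \<zeta> j') + sqrt (norm (x k - x j + Kf \<Phi> (\<zeta> j') (\<zeta> k'))))
            \<le> d (\<zeta> j', x j) (\<zeta> k', x k)" by (subst key') (rule lo)
        show False
        proof (cases "j' = k'")
          case False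
          have "\<delta> \<le> norm (\<zeta> k' - \<zeta> j')" using dZ[of j' k'] P Q Pj Qk False
            by (simp add: dist_norm norm_minus_commute)
          moreover have "0 \<le> sqrt (norm (x k - x j + Kf \<Phi> (\<zeta> j') (\<zeta> k')))" by simp
          ultimately have "\<delta> \<le> norm (\<zeta> k' - \<zeta> j') + sqrt (norm (x k - x j + Kf \<Phi> (\<zeta> j') (\<zeta> k')))" by linarith
          then have "a * \<delta> \<le> a * (norm (\<zeta> k' - \<zeta> j') + sqrt (norm (x k - x j + Kf \<Phi> (\<zeta> j') (\<zeta> k'))))"
            using a by (intro mult_left_mono) auto
          then show False using ge lt by linarith
        next
          case True
          then have jk: "j \<noteq> k" using PQ Pj Qk by auto
          have "\<delta>^2 \<le> norm (x k - x j)" using dX[of j k] P Q Pj Qk jk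
            by (simp add: dist_norm norm_minus_commute)
          then have "sqrt (\<delta>^2) \<le> sqrt (norm (x k - x j))" by (rule real_sqrt_le_mono)
          then have "\<delta> \<le> sqrt (norm (x k - x j + Kf \<Phi> (\<zeta> j') (\<zeta> k')))" using \<delta> True by simp
          moreover have "0 \<le> norm (\<zeta> k' - \<zeta> j')" by simp
          ultimately have "\<delta> \<le> norm (\<zeta> k' - \<zeta> j') + sqrt (norm (x k - x j + Kf \<Phi> (\<zeta> j') (\<zeta> k')))" by linarith
          then have "a * \<delta> \<le> a * (norm (\<zeta> k' - \<zeta> j') + sqrt (norm (x k - x j + Kf \<Phi> (\<zeta> j') (\<zeta> k'))))"
            using a by (intro mult_left_mono) auto
          then show False using ge lt by linarith
        qed
      qed
    next
      show "(\<Union>k\<in>J \<times> J'. dball d ((\<lambda>(j, j'). (\<zeta> j', x j)) k) (C' * R * (C * \<delta>))) = UNIV"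
      proof (rule set_eqI, rule iffI)
        fix q :: "(complex^'n) \<times> (real^'m)"
        obtain z y where q: "q = (z,y)" by fastforce
        have UZ: "(\<Union>k\<in>J'. dball dist (\<zeta> k) (R * \<delta>)) = UNIV" using LZ unfolding is_lattice_def by (rule conjunct2)
        have "z \<in> (\<Union>k\<in>J'. dball dist (\<zeta> k) (R * \<delta>))" unfolding UZ by (rule UNIV_I)
        then obtain k' where k': "k' \<in> J'" and zk: "dist (\<zeta> k') z < R * \<delta>" unfolding dball_def by blast
        define c where "c = y + Kf \<Phi> (\<zeta> k') z"
        have UX: "(\<Union>k\<in>J. dball dist (x k) (R^2 * \<delta>^2)) = UNIV" using LX unfolding is_lattice_def by (rule conjunct2)
        have "c \<in> (\<Union>k\<in>J. dball dist (x k) (R^2 * \<delta>^2))" unfolding UX by (rule UNIV_I)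
        then obtain j where j: "j \<in> J" and xj: "dist (x j) c < R^2 * \<delta>^2" unfolding dball_def by blast
        have eq2: "y - x j + Kf \<Phi> (\<zeta> k') z = c - x j" unfolding c_def by (simp add: algebra_simps)
        have "d (\<zeta> k', x j) (z,y) = d (0,0) (z - \<zeta> k', c - x j)"
          using key'[of "\<zeta> k'" "x j" z y] eq2 by simp
        also have "\<dots> \<le> A * (norm (z - \<zeta> k') + sqrt (norm (c - x j)))" by (rule up)
        also have "\<dots> \<le> A * (R * \<delta> + R * \<delta>)"
        proof -
          have "norm (z - \<zeta> k') < R * \<delta>" using zk by (simp add: dist_norm norm_minus_commute)
          moreover have "sqrt (norm (c - x j)) < sqrt ((R * \<delta>)^2)"
            using xj by (simp add: dist_norm norm_minus_commute power_mult_distrib)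
          then have "sqrt (norm (c - x j)) < R * \<delta>" using R \<delta> by simp
          ultimately show ?thesis using A by (intro mult_left_mono) auto
        qed
        also have "\<dots> < C' * R * (C * \<delta>)"
        proof -
          have "C' * R * (C * \<delta>) = 2 * (A + 1) * (R * \<delta>)" using C unfolding C'_def by (simp add: field_simps)
          moreover have "R * \<delta> > 0" using R \<delta> by simp
          ultimately show ?thesis by (simp add: algebra_simps)
        qed
        finally have "q \<in> dball d ((\<lambda>(j, j'). (\<zeta> j', x j)) (j,k')) (C' * R * (C * \<delta>))"
          unfolding q dball_def by simp
        then show "q \<in> (\<Union>k\<in>J \<times> J'. dball d ((\<lambda>(j, j'). (\<zeta> j', x j)) k) (C' * R * (C * \<delta>)))"
          using j k' by blast
      qed simp
    qed
  qed
qed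

end
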